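(* There is an absolute constant $C>0$ such that for every nonconstant harmonic function $u:\mathbb{C}\to\mathbb{R}$ there exists a sequence of discs $D(z_n,\rho_n)$ ($z_n\in\mathbb{C}$, $\rho_n>0$) with, for all $n$, $u(z_n)=0$ and $M(u,z_n,\rho_n)\le C\,M(u,z_n,\rho_n/2)$, and moreover $\lim_{n\to\infty}M(u,z_n,\rho_n)=+\infty$.
   Context: For a real function $u$, $M(u,z,r)=\sup_{D(z,r)}u$ denotes the supremum of $u$ over the disc $D(z,r)$ of center $z$ and radius $r$. *)

theory Defs
  imports "HOL-Analysis.Analysis"
begin

definition partial_x :: "(complex \<Rightarrow> real) \<Rightarrow> complex \<Rightarrow> real" where
  "partial_x f z = deriv (\<lambda>t::real. f (z + of_real t)) 0"

definition partial_y :: "(complex \<Rightarrow> real) \<Rightarrow> complex \<Rightarrow> real" where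
  "partial_y f z = deriv (\<lambda>t::real. f (z + \<i> * of_real t)) 0"

definition harmonic :: "(complex \<Rightarrow> real) \<Rightarrow> bool" where
  "harmonic u \<longleftrightarrow>
     (\<forall>z. u differentiable (at z)) \<and>
     (\<forall>z. partial_x u differentiable (at z) \<and> partial_y u differentiable (at z)) \<and>
     continuous_on UNIV (partial_x (partial_x u)) \<and>
     continuous_on UNIV (partial_y (partial_y u)) \<and>
     continuous_on UNIV (partial_x (partial_y u)) \<and>
     continuous_on UNIV (partial_y (partial_x u)) \<and>
     (\<forall>z. partial_x (partial_x u) z + partial_y (partial_y u) z = 0)"

definition Msup :: "(complex \<Rightarrow> real) \<Rightarrow> complex \<Rightarrow> real \<Rightarrow> real" where
  "Msup u z r = (SUP w\<in>ball z r. u w)"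

end

theory Submission
  imports Defs "HOL-Complex_Analysis.Complex_Analysis"
begin


lemma line_deriv:
  assumes "(f has_derivative D) (at (w + of_real t0 * v))"
  shows "((\<lambda>t::real. f (w + of_real t * v)) has_real_derivative D v) (at t0)"
proof -
  have l: "linear D" using assms has_derivative_linear by blast
  have "((\<lambda>t::real. w + of_real t * v) has_derivative (\<lambda>t. of_real t * v)) (at t0)"
  proof -
    have e: "(\<lambda>t::real. of_real t * v) = (\<lambda>t. t *\<^sub>R v)" by (simp add: scaleR_conv_of_real)
    have "bounded_linear (\<lambda>t::real. of_real t * v)" unfolding e by (rule bounded_linear_scaleR_left)
    then show ?thesis by (auto intro!: derivative_eq_intros bounded_linear_imp_has_derivative)
  qed
  from has_derivative_compose[OF this assms]
  have d: "((\<lambda>t::real. f (w + of_real t * v)) has_derivative (\<lambda>t. D (of_real t * v))) (at t0)" .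
  have eq: "(\<lambda>t. D (of_real t * v)) = (\<lambda>t. D v * t)"
  proof
    fix t :: real
    have "D (of_real t * v) = D (t *\<^sub>R v)" by (simp add: scaleR_conv_of_real)
    also have "\<dots> = t *\<^sub>R D v" using l by (simp add: linear_scale)
    finally show "D (of_real t * v) = D v * t" by simp
  qed
  show ?thesis using d unfolding eq has_field_derivative_def .
qed

lemma partial_x_eq:
  assumes "(f has_derivative D) (at z)"
  shows "partial_x f z = D 1"
proof -
  have "((\<lambda>t::real. f (z + of_real t * 1)) has_real_derivative D 1) (at 0)"
    by (rule line_deriv) (use assms in simp)
  then show ?thesis unfolding partial_x_def by (simp add: DERIV_imp_deriv)
qed

lemma partial_y_eq:
  assumes "(f has_derivative D) (at z)"
  shows "partial_y f z = D \<i>"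
proof -
  have "((\<lambda>t::real. f (z + of_real t * \<i>)) has_real_derivative D \<i>) (at 0)"
    by (rule line_deriv) (use assms in simp)
  then show ?thesis unfolding partial_y_def by (simp add: DERIV_imp_deriv mult.commute)
qed

lemma px_line:
  assumes "\<And>z. f differentiable (at z)"
  shows "((\<lambda>t::real. f (w + of_real t)) has_real_derivative partial_x f (w + of_real t0)) (at t0)"
proof -
  obtain D where D: "(f has_derivative D) (at (w + of_real t0 * 1))"
    using assms differentiable_def by blast
  have "((\<lambda>t::real. f (w + of_real t * 1)) has_real_derivative D 1) (at t0)"
    by (rule line_deriv[OF D])
  moreover have "partial_x f (w + of_real t0) = D 1" using partial_x_eq D by simp
  ultimately show ?thesis by simp
qed

lemma py_line:
  assumes "\<And>z. f differentiable (at z)"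
  shows "((\<lambda>t::real. f (w + \<i> * of_real t)) has_real_derivative partial_y f (w + \<i> * of_real t0)) (at t0)"
proof -
  obtain D where D: "(f has_derivative D) (at (w + of_real t0 * \<i>))"
    using assms differentiable_def by blast
  have "((\<lambda>t::real. f (w + of_real t * \<i>)) has_real_derivative D \<i>) (at t0)"
    by (rule line_deriv[OF D])
  moreover have "partial_y f (w + \<i> * of_real t0) = D \<i>" using partial_y_eq D by (simp add: mult.commute)
  ultimately show ?thesis by (simp add: mult.commute)
qed

lemma mixed_mvt:
  fixes \<Phi> A B :: "real \<Rightarrow> real \<Rightarrow> real"
  assumes dA: "\<And>s t. ((\<lambda>s. \<Phi> s t) has_real_derivative A s t) (at s)"
  and dB: "\<And>s t. ((\<lambda>t. A s t) has_real_derivative B s t) (at t)"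
  and h: "h > 0"
  shows "\<exists>\<xi> \<eta>. 0<\<xi> \<and> \<xi><h \<and> 0<\<eta> \<and> \<eta><h \<and> \<Phi> h h - \<Phi> h 0 - \<Phi> 0 h + \<Phi> 0 0 = h*h*B \<xi> \<eta>"
proof -
  have "\<And>s. ((\<lambda>s. \<Phi> s h - \<Phi> s 0) has_real_derivative A s h - A s 0) (at s)"
    by (intro derivative_intros dA)
  from MVT2[OF h this] obtain \<xi> where \<xi>: "0 < \<xi>" "\<xi> < h"
    "(\<Phi> h h - \<Phi> h 0) - (\<Phi> 0 h - \<Phi> 0 0) = (h - 0) * (A \<xi> h - A \<xi> 0)" by blast
  from MVT2[OF h dB[of \<xi>]] obtain \<eta> where \<eta>: "0 < \<eta>" "\<eta> < h"
    "A \<xi> h - A \<xi> 0 = (h - 0) * B \<xi> \<eta>" by blast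
  show ?thesis using \<xi> \<eta> by (intro exI[of _ \<xi>] exI[of _ \<eta>]) (auto simp: algebra_simps)
qed



lemma norm_pt: "norm (complex_of_real x + \<i> * complex_of_real y) \<le> \<bar>x\<bar> + \<bar>y\<bar>"
proof -
  have "norm (complex_of_real x + \<i> * complex_of_real y) \<le> norm (complex_of_real x) + norm (\<i> * complex_of_real y)"
    by (rule norm_triangle_ineq)
  also have "\<dots> = \<bar>x\<bar> + \<bar>y\<bar>" by (simp add: norm_mult)
  finally show ?thesis .
qed

lemma aux4: "(a::real) - b - c + d = x \<Longrightarrow> a - c - b + d = y \<Longrightarrow> x = y" by linarith

lemma clairaut_approx:
  assumes du: "\<And>z. u differentiable (at z)"
  and dx: "\<And>z. partial_x u differentiable (at z)" and dy: "\<And>z. partial_y u differentiable (at z)"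
  and h: "h > 0"
  shows "\<exists>p1 p2. dist p1 z < 2*h \<and> dist p2 z < 2*h \<and>
           partial_y (partial_x u) p1 = partial_x (partial_y u) p2"
proof -
  define \<Phi> where "\<Phi> s t = u (z + \<i> * of_real t + of_real s)" for s t :: real
  define A1 where "A1 s t = partial_x u (z + \<i> * of_real t + of_real s)" for s t :: real
  define B1 where "B1 s t = partial_y (partial_x u) ((z + of_real s) + \<i> * of_real t)" for s t :: real
  have "\<exists>\<xi> \<eta>. 0<\<xi> \<and> \<xi><h \<and> 0<\<eta> \<and> \<eta><h \<and> \<Phi> h h - \<Phi> h 0 - \<Phi> 0 h + \<Phi> 0 0 = h*h*B1 \<xi> \<eta>"
  proof (rule mixed_mvt[OF _ _ h])
    fix s t :: real
    show "((\<lambda>s. \<Phi> s t) has_real_derivative A1 s t) (at s)"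
      unfolding \<Phi>_def A1_def by (rule px_line[OF du])
    have e: "(\<lambda>t. A1 s t) = (\<lambda>t. partial_x u ((z + of_real s) + \<i> * of_real t))"
      unfolding A1_def by (rule ext) (simp add: ac_simps)
    show "((\<lambda>t. A1 s t) has_real_derivative B1 s t) (at t)"
      unfolding e B1_def by (rule py_line[OF dx])
  qed
  then obtain \<xi> \<eta> where 1: "0<\<xi>" "\<xi><h" "0<\<eta>" "\<eta><h" "\<Phi> h h - \<Phi> h 0 - \<Phi> 0 h + \<Phi> 0 0 = h*h*B1 \<xi> \<eta>"
    by blast
  define \<Psi> where "\<Psi> s t = \<Phi> t s" for s t
  define A2 where "A2 s t = partial_y u ((z + of_real t) + \<i> * of_real s)" for s t :: real
  define B2 where "B2 s t = partial_x (partial_y u) ((z + \<i> * of_real s) + of_real t)" for s t :: real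
  have "\<exists>\<xi> \<eta>. 0<\<xi> \<and> \<xi><h \<and> 0<\<eta> \<and> \<eta><h \<and> \<Psi> h h - \<Psi> h 0 - \<Psi> 0 h + \<Psi> 0 0 = h*h*B2 \<xi> \<eta>"
  proof (rule mixed_mvt[OF _ _ h])
    fix s t :: real
    have e: "(\<lambda>s. \<Psi> s t) = (\<lambda>s. u ((z + of_real t) + \<i> * of_real s))"
      unfolding \<Psi>_def \<Phi>_def by (rule ext) (simp add: ac_simps)
    show "((\<lambda>s. \<Psi> s t) has_real_derivative A2 s t) (at s)"
      unfolding e A2_def by (rule py_line[OF du])
    have e2: "(\<lambda>t. A2 s t) = (\<lambda>t. partial_y u ((z + \<i> * of_real s) + of_real t))"
      unfolding A2_def by (rule ext) (simp add: ac_simps)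
    show "((\<lambda>t. A2 s t) has_real_derivative B2 s t) (at t)"
      unfolding e2 B2_def by (rule px_line[OF dy])
  qed
  then obtain \<xi>' \<eta>' where 2: "0<\<xi>'" "\<xi>'<h" "0<\<eta>'" "\<eta>'<h" "\<Psi> h h - \<Psi> h 0 - \<Psi> 0 h + \<Psi> 0 0 = h*h*B2 \<xi>' \<eta>'"
    by blast
  have "h*h*B1 \<xi> \<eta> = h*h*B2 \<xi>' \<eta>'" using 1(5) 2(5) unfolding \<Psi>_def by (rule aux4)
  then have eq: "B1 \<xi> \<eta> = B2 \<xi>' \<eta>'" using h by simp
  have d1: "dist ((z + of_real \<xi>) + \<i> * of_real \<eta>) z < 2*h"
    using norm_pt[of \<xi> \<eta>] 1 by (simp add: dist_norm)
  have d2: "dist ((z + \<i> * of_real \<xi>') + of_real \<eta>') z < 2*h"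
    using norm_pt[of \<eta>' \<xi>'] 2(1-4) by (simp add: dist_norm add.assoc add.commute[of "\<i> * _"])
  show ?thesis
    apply (rule exI[of _ "(z + of_real \<xi>) + \<i> * of_real \<eta>"])
    apply (rule exI[of _ "(z + \<i> * of_real \<xi>') + of_real \<eta>'"])
    using eq d1 d2 unfolding B1_def B2_def by simp
qed

lemma aux_abs: "\<bar>(x::real) - a\<bar> < \<bar>a - b\<bar> / 2 \<Longrightarrow> \<bar>x - b\<bar> < \<bar>a - b\<bar> / 2 \<Longrightarrow> False"
  by (auto simp: abs_if split: if_splits)

lemma clairaut:
  assumes du: "\<And>z. u differentiable (at z)"
  and dx: "\<And>z. partial_x u differentiable (at z)" and dy: "\<And>z. partial_y u differentiable (at z)"
  and c1: "continuous_on UNIV (partial_y (partial_x u))" and c2: "continuous_on UNIV (partial_x (partial_y u))"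
  shows "partial_y (partial_x u) z = partial_x (partial_y u) z"
proof (rule ccontr)
  define a where "a = partial_y (partial_x u) z"
  define b where "b = partial_x (partial_y u) z"
  assume "partial_y (partial_x u) z \<noteq> partial_x (partial_y u) z"
  then have ne: "\<bar>a - b\<bar> > 0" unfolding a_def b_def by simp
  define e where "e = \<bar>a - b\<bar> / 2"
  have e: "e > 0" using ne e_def by simp
  obtain d1 where d1: "d1 > 0" "\<And>x. dist x z < d1 \<Longrightarrow> dist (partial_y (partial_x u) x) a < e"
    using c1 e unfolding continuous_on_iff a_def by blast
  obtain d2 where d2: "d2 > 0" "\<And>x. dist x z < d2 \<Longrightarrow> dist (partial_x (partial_y u) x) b < e"
    using c2 e unfolding continuous_on_iff b_def by blast
  define h where "h = min d1 d2 / 2"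
  have h: "h > 0" using d1 d2 h_def by simp
  obtain p1 p2 where p: "dist p1 z < 2*h" "dist p2 z < 2*h"
    "partial_y (partial_x u) p1 = partial_x (partial_y u) p2"
    using clairaut_approx[OF du dx dy h] by blast
  have q1: "dist p1 z < d1" using p(1) h_def by simp
  have q2: "dist p2 z < d2" using p(2) h_def by simp
  have "dist (partial_y (partial_x u) p1) a < e" "dist (partial_x (partial_y u) p2) b < e"
    using d1(2)[OF q1] d2(2)[OF q2] by auto
  then show False using p(3) aux_abs unfolding e_def dist_real_def by metis
qed



lemma lin_decomp:
  assumes "linear (L::complex \<Rightarrow> real)"
  shows "L h = Re h * L 1 + Im h * L \<i>"
proof -
  have "h = Re h *\<^sub>R 1 + Im h *\<^sub>R \<i>" by (simp add: complex_eq_iff)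
  then have "L h = L (Re h *\<^sub>R 1 + Im h *\<^sub>R \<i>)" by simp
  also have "\<dots> = Re h * L 1 + Im h * L \<i>"
    using assms by (simp add: linear_add linear_scale)
  finally show ?thesis .
qed

lemma harmonic_Re:
  assumes "harmonic u"
  shows "\<exists>F. F holomorphic_on UNIV \<and> (\<forall>z. u z = Re (F z))"
proof -
  note H = assms[unfolded harmonic_def]
  have du: "\<And>z. u differentiable (at z)" using H by blast
  have dx: "\<And>z. partial_x u differentiable (at z)" using H by blast
  have dy: "\<And>z. partial_y u differentiable (at z)" using H by blast
  have c1: "continuous_on UNIV (partial_y (partial_x u))" using H by blast
  have c2: "continuous_on UNIV (partial_x (partial_y u))" using H by blast
  have lap: "\<And>z. partial_x (partial_x u) z + partial_y (partial_y u) z = 0" using H by blast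
  define g where "g w = of_real (partial_x u w) - \<i> * of_real (partial_y u w)" for w
  have gd: "(g has_field_derivative (of_real (partial_x (partial_x u) w) - \<i> * of_real (partial_x (partial_y u) w))) (at w)" for w
  proof -
    obtain Dx where Dx: "(partial_x u has_derivative Dx) (at w)" using dx differentiable_def by blast
    obtain Dy where Dy: "(partial_y u has_derivative Dy) (at w)" using dy differentiable_def by blast
    have lx: "linear Dx" using Dx has_derivative_linear by blast
    have ly: "linear Dy" using Dy has_derivative_linear by blast
    have x1: "Dx 1 = partial_x (partial_x u) w" using partial_x_eq[OF Dx] by simp
    have xi: "Dx \<i> = partial_y (partial_x u) w" using partial_y_eq[OF Dx] by simp
    have y1: "Dy 1 = partial_x (partial_y u) w" using partial_x_eq[OF Dy] by simp
    have yi: "Dy \<i> = partial_y (partial_y u) w" using partial_y_eq[OF Dy] by simp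
    have sym: "partial_y (partial_x u) w = partial_x (partial_y u) w" by (rule clairaut[OF du dx dy c1 c2])
    have d: "(g has_derivative (\<lambda>h. of_real (Dx h) - \<i> * of_real (Dy h))) (at w)"
      unfolding g_def by (intro derivative_intros Dx Dy)
    have eq: "(\<lambda>h. of_real (Dx h) - \<i> * of_real (Dy h)) =
       (\<lambda>h. (of_real (partial_x (partial_x u) w) - \<i> * of_real (partial_x (partial_y u) w)) * h)"
    proof
      fix h
      have e1: "Dx h = Re h * Dx 1 + Im h * Dx \<i>" by (rule lin_decomp[OF lx])
      have e2: "Dy h = Re h * Dy 1 + Im h * Dy \<i>" by (rule lin_decomp[OF ly])
      have lw: "partial_y (partial_y u) w = - partial_x (partial_x u) w" using lap[of w] by linarith
      show "of_real (Dx h) - \<i> * of_real (Dy h) =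
         (of_real (partial_x (partial_x u) w) - \<i> * of_real (partial_x (partial_y u) w)) * h"
        unfolding e1 e2 x1 xi y1 yi sym lw by (simp add: complex_eq_iff algebra_simps)
    qed
    show ?thesis using d unfolding eq has_field_derivative_def .
  qed
  have gh: "g holomorphic_on UNIV"
    using gd by (auto simp: holomorphic_on_def field_differentiable_def)
  obtain G where G: "\<And>x. (G has_field_derivative g x) (at x)"
    using holomorphic_convex_primitive'[OF convex_UNIV open_UNIV gh] by auto
  have z: "((\<lambda>w. Re (G w) - u w) has_derivative (\<lambda>h. 0)) (at w within UNIV)" for w
  proof -
    obtain Du where Du: "(u has_derivative Du) (at w)" using du differentiable_def by blast
    have l: "linear Du" using Du has_derivative_linear by blast
    have e: "Du h = Re h * partial_x u w + Im h * partial_y u w" for h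
      using lin_decomp[OF l, of h] partial_x_eq[OF Du] partial_y_eq[OF Du] by simp
    have "((\<lambda>w. Re (G w) - u w) has_derivative (\<lambda>h. Re (g w * h) - Du h)) (at w)"
      using G[of w] Du unfolding has_field_derivative_def by (intro derivative_intros) auto
    moreover have "(\<lambda>h. Re (g w * h) - Du h) = (\<lambda>h. 0)"
      by (rule ext) (simp add: e g_def algebra_simps)
    ultimately show ?thesis by simp
  qed
  obtain c where c: "\<And>x. Re (G x) - u x = c"
    using has_derivative_zero_constant[OF convex_UNIV z] by blast
  define F where "F w = G w - of_real c" for w
  have "F holomorphic_on UNIV"
    unfolding F_def using G by (intro holomorphic_intros) (auto simp: holomorphic_on_def field_differentiable_def)
  moreover have "\<forall>z. u z = Re (F z)" using c by (simp add: F_def) (metis add_diff_cancel_left' diff_add_cancel)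
  ultimately show ?thesis by blast
qed




lemma bdd_ball:
  fixes u :: "complex \<Rightarrow> real"
  assumes "continuous_on UNIV u"
  shows "bdd_above (u ` ball z r)"
proof -
  have "compact (u ` cball z r)"
    by (intro compact_continuous_image compact_cball continuous_on_subset[OF assms]) auto
  then have "bdd_above (u ` cball z r)" by (intro bounded_imp_bdd_above compact_imp_bounded)
  then show ?thesis by (rule bdd_above_mono) auto
qed

lemma Msup_ge:
  fixes u :: "complex \<Rightarrow> real"
  assumes "continuous_on UNIV u" "w \<in> ball z r"
  shows "u w \<le> Msup u z r"
  unfolding Msup_def by (rule cSUP_upper[OF assms(2) bdd_ball[OF assms(1)]])

lemma Msup_lt:
  fixes u :: "complex \<Rightarrow> real"
  assumes "continuous_on UNIV u" "r > 0" "a < Msup u z r"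
  shows "\<exists>w\<in>ball z r. a < u w"
  using assms less_cSUP_iff[of "ball z r" u a] bdd_ball[OF assms(1)] unfolding Msup_def by auto

lemma Msup_mono:
  fixes u :: "complex \<Rightarrow> real"
  assumes "continuous_on UNIV u" "r > 0" "ball z r \<subseteq> ball z' r'"
  shows "Msup u z r \<le> Msup u z' r'"
  unfolding Msup_def by (rule cSUP_subset_mono) (use assms bdd_ball[OF assms(1)] in auto)

lemma Msup_mono_r:
  fixes u :: "complex \<Rightarrow> real"
  assumes "continuous_on UNIV u" "r > 0" "r \<le> r'"
  shows "Msup u z r \<le> Msup u z r'"
  by (rule Msup_mono[OF assms(1,2)]) (use assms in auto)


lemma Re_bounded_const:
  assumes hol: "F holomorphic_on UNIV" and K: "\<And>z. Re (F z) \<le> K"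
  shows "F z = F 0"
proof -
  define g where "g z = 1 / (F z - of_real (K + 1))" for z
  have ne: "norm (F z - of_real (K + 1)) \<ge> 1" for z
  proof -
    have "1 \<le> \<bar>Re (F z - of_real (K + 1))\<bar>" using K[of z] by simp
    also have "\<dots> \<le> norm (F z - of_real (K + 1))" by (rule abs_Re_le_cmod)
    finally show ?thesis .
  qed
  then have nz: "F z - of_real (K + 1) \<noteq> 0" for z by (metis norm_zero not_one_le_zero)
  have gh: "g holomorphic_on UNIV" unfolding g_def
    by (intro holomorphic_intros hol) (use nz in auto)
  have "norm (g z) \<le> 1" for z
    using ne[of z] unfolding g_def by (simp add: norm_divide divide_le_eq_1)
  then have "bounded (range g)" by (metis bounded_iff rangeE)
  then have "g constant_on UNIV" by (rule Liouville_theorem[OF gh])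
  then have "g z = g 0" by (metis UNIV_I constant_on_def)
  then show ?thesis unfolding g_def using nz by simp
qed

lemma Re_unbounded:
  assumes hol: "F holomorphic_on UNIV" and nc: "\<not> (\<exists>c. \<forall>z. Re (F z) = c)"
  shows "\<exists>w. Re (F w) > K"
proof (rule ccontr)
  assume "\<not> (\<exists>w. Re (F w) > K)"
  then have "\<And>z. Re (F z) \<le> K" by (simp add: not_less)
  then have "\<And>z. F z = F 0" using Re_bounded_const[OF hol] by blast
  then show False using nc by metis
qed

lemma exists_zero_between:
  fixes u :: "complex \<Rightarrow> real"
  assumes "continuous_on S u" "connected S" "a \<in> S" "b \<in> S" "u a \<le> 0" "0 \<le> u b"
  shows "\<exists>c\<in>S. u c = 0"
proof -
  have "connected (u ` S)" by (rule connected_continuous_image[OF assms(1,2)])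
  then have "0 \<in> u ` S"
    by (rule connectedD_interval) (use assms in auto)
  then show ?thesis by auto
qed



lemma cayley_lt:
  assumes "Re \<zeta> > 0" "Re a > 0"
  shows "norm (\<zeta> - a) < norm (\<zeta> + cnj a)"
proof -
  have "(norm (\<zeta> - a))^2 < (norm (\<zeta> + cnj a))^2"
    unfolding cmod_power2 using assms by (simp add: power2_eq_square algebra_simps mult_pos_pos)
  then show ?thesis by (rule power_less_imp_less_base) simp
qed

lemma harnack_alg:
  assumes X: "Re \<zeta> > 0" and A: "Re a > 0" and m: "0 \<le> m" "m \<le> 1"
    and n: "norm (\<zeta> - a) \<le> m * norm (\<zeta> + cnj a)"
  shows "Re \<zeta> \<ge> Re a * (1 - m) / 2"
proof -
  define X where "X = Re \<zeta>"
  define Y where "Y = Im \<zeta>"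
  define \<alpha> where "\<alpha> = Re a"
  define \<beta> where "\<beta> = Im a"
  have "(norm (\<zeta> - a))^2 \<le> (m * norm (\<zeta> + cnj a))^2"
    using n by (intro power_mono) auto
  then have "(X-\<alpha>)^2 + (Y-\<beta>)^2 \<le> m^2 * ((X+\<alpha>)^2 + (Y-\<beta>)^2)"
    unfolding power_mult_distrib cmod_power2 X_def Y_def \<alpha>_def \<beta>_def by (simp add: algebra_simps)
  then have "(X-\<alpha>)^2 + (Y-\<beta>)^2 \<le> m^2 * (X+\<alpha>)^2 + m^2 * (Y-\<beta>)^2"
    by (simp add: distrib_left)
  moreover have "m^2 * (Y-\<beta>)^2 \<le> (Y-\<beta>)^2"
    using m by (intro mult_left_le_one_le) (auto simp: power_le_one)
  ultimately have "(X-\<alpha>)^2 \<le> m^2 * (X+\<alpha>)^2" by linarith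
  then have "(X-\<alpha>)^2 \<le> (m * (X+\<alpha>))^2" by (simp add: power_mult_distrib)
  then have "\<bar>X-\<alpha>\<bar>^2 \<le> (m * (X+\<alpha>))^2" by simp
  moreover have "0 \<le> m * (X+\<alpha>)" using m X A unfolding X_def \<alpha>_def by simp
  ultimately have "\<bar>X-\<alpha>\<bar> \<le> m * (X+\<alpha>)" by (rule power2_le_imp_le)
  then have 1: "\<alpha> * (1 - m) \<le> X * (1 + m)" by (simp add: algebra_simps abs_if split: if_splits)
  have "X * (1 + m) \<le> X * 2" using X m unfolding X_def by (intro mult_left_mono) auto
  with 1 show ?thesis unfolding X_def \<alpha>_def by simp
qed

lemma harnack:
  assumes hol: "F holomorphic_on ball p d" and pos: "\<And>x. x \<in> ball p d \<Longrightarrow> Re (F x) > 0"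
    and x: "x \<in> ball p d"
  shows "Re (F x) \<ge> Re (F p) * (1 - dist p x / d) / 2"
proof -
  have d: "d > 0" using x by (metis dist_not_less_zero mem_ball order_le_less_trans not_le)
  define a where "a = F p"
  have pa: "Re a > 0" unfolding a_def using pos d by simp
  define \<phi> where "\<phi> \<xi> = p + of_real d * \<xi>" for \<xi>
  have \<phi>in: "\<phi> \<xi> \<in> ball p d" if "\<xi> \<in> ball 0 1" for \<xi>
    using that d by (simp add: \<phi>_def dist_norm norm_mult)
  have ph: "\<phi> holomorphic_on ball 0 1" unfolding \<phi>_def by (intro holomorphic_intros)
  have hc: "(F \<circ> \<phi>) holomorphic_on ball 0 1"
    by (rule holomorphic_on_compose_gen[OF ph hol]) (use \<phi>in in auto)
  have nz: "F (\<phi> \<xi>) + cnj a \<noteq> 0" if "\<xi> \<in> ball 0 1" for \<xi>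
  proof -
    have r: "Re (F (\<phi> \<xi>) + cnj a) > 0" using pos[OF \<phi>in[OF that]] pa by simp
    show ?thesis
    proof
      assume "F (\<phi> \<xi>) + cnj a = 0"
      then have "Re (F (\<phi> \<xi>) + cnj a) = 0" by (simp only: zero_complex.sel)
      with r show False by simp
    qed
  qed
  define h where "h \<xi> = (F (\<phi> \<xi>) - a) / (F (\<phi> \<xi>) + cnj a)" for \<xi>
  have hh: "h holomorphic_on ball 0 1"
    unfolding h_def using hc nz by (intro holomorphic_intros) (auto simp: o_def)
  have h0: "h 0 = 0" unfolding h_def \<phi>_def a_def by simp
  have hlt: "norm (h \<xi>) < 1" if "norm \<xi> < 1" for \<xi>
  proof -
    have in1: "\<xi> \<in> ball 0 1" using that by simp
    have "norm (F (\<phi> \<xi>) - a) < norm (F (\<phi> \<xi>) + cnj a)"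
      by (rule cayley_lt[OF pos[OF \<phi>in[OF in1]] pa])
    then show ?thesis unfolding h_def by (simp add: norm_divide divide_less_eq_1)
  qed
  define \<xi>0 where "\<xi>0 = (x - p) / of_real d"
  have n0: "norm \<xi>0 = dist p x / d" using d by (simp add: \<xi>0_def norm_divide dist_norm norm_minus_commute)
  have n1: "norm \<xi>0 < 1" using n0 x d by simp
  have px: "\<phi> \<xi>0 = x" using d by (simp add: \<phi>_def \<xi>0_def)
  have "norm (h \<xi>0) \<le> norm \<xi>0"
    by (rule Schwarz_Lemma(1)[OF hh h0 hlt n1])
  then have "norm (F x - a) / norm (F x + cnj a) \<le> dist p x / d"
    unfolding h_def px n0 by (simp add: norm_divide)
  moreover have "norm (F x + cnj a) > 0" using nz[of \<xi>0] n1 px by simp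
  ultimately have "norm (F x - a) \<le> (dist p x / d) * norm (F x + cnj a)"
    by (simp add: divide_le_eq)
  moreover have "0 \<le> dist p x / d" "dist p x / d \<le> 1" using d n0 n1 by auto
  ultimately show ?thesis unfolding a_def[symmetric]
    using harnack_alg[OF pos[OF x] pa] by blast
qed



lemma cont_u:
  assumes hol: "F holomorphic_on UNIV" and uF: "\<And>z. u z = Re (F z)"
  shows "continuous_on UNIV u"
proof -
  have "u = (\<lambda>z. Re (F z))" using uF by auto
  then show ?thesis using holomorphic_on_imp_continuous_on[OF hol] by (simp add: continuous_on_Re)
qed

lemma step:
  assumes hol: "F holomorphic_on UNIV" and uF: "\<And>z. u z = Re (F z)"
    and z0: "u z = 0" and r: "r > 0" and fail: "\<not> Msup u z r \<le> 64 * Msup u z (r/2)"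
  shows "\<exists>w. u w = 0 \<and> dist w z < 2*r \<and> 2 * Msup u z (r/2) \<le> Msup u w (r/4)"
proof -
  have cu: "continuous_on UNIV u" by (rule cont_u[OF hol uF])
  define q where "q = Msup u z (r/2)"
  have q0: "q \<ge> 0" unfolding q_def using Msup_ge[OF cu, of z z "r/2"] z0 r by simp
  define A where "A = Msup u z r"
  have A: "A > 64 * q" using fail unfolding A_def q_def by simp
  then have "A/2 < A" using q0 by simp
  then obtain p where p: "p \<in> ball z r" "A/2 < u p" using Msup_lt[OF cu r] unfolding A_def by blast
  have up: "u p > 32 * q" "u p > 0" using p A q0 by auto
  define Z where "Z = {w. u w = 0}"
  have cZ: "closed Z"
    using continuous_closed_preimage_constant[OF cu closed_UNIV, of 0] unfolding Z_def by simp
  have nZ: "Z \<noteq> {}" using z0 Z_def by auto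
  obtain w where w: "w \<in> Z" "\<And>y. y \<in> Z \<Longrightarrow> dist p w \<le> dist p y"
    using distance_attains_inf[OF cZ nZ, of p] by blast
  define d where "d = dist p w"
  have dr: "d < r" using w(2)[of z] z0 p(1) unfolding d_def Z_def by (simp add: dist_commute)
  have wp: "w \<noteq> p" using w(1) up unfolding Z_def by auto
  have d0: "d > 0" using wp unfolding d_def by simp
  have pos: "u x > 0" if x: "x \<in> ball p d" for x
  proof (rule ccontr)
    assume "\<not> u x > 0"
    then have "u x \<le> 0" by simp
    then obtain c where c: "c \<in> closed_segment x p" "u c = 0"
      using exists_zero_between[OF continuous_on_subset[OF cu] connected_segment, of x p x p] up
      by auto
    have "dist c p \<le> dist x p" using dist_in_closed_segment[OF c(1)] by blast
    also have "\<dots> < d" using x by (simp add: dist_commute)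
    finally have "dist p c < d" by (simp add: dist_commute)
    moreover have "dist p w \<le> dist p c" using w(2)[of c] c(2) unfolding Z_def by simp
    ultimately show False unfolding d_def by simp
  qed
  have posF: "Re (F x) > 0" if "x \<in> ball p d" for x using pos[OF that] uF by simp
  have holb: "F holomorphic_on ball p d" using hol holomorphic_on_subset by blast
  define s where "s = min d (r/4) / (2*d)"
  have s0: "s > 0" using d0 r unfolding s_def by simp
  have s1: "s \<ge> 1/8"
  proof -
    have "min d (r/4) \<ge> d/4" using dr d0 by simp
    then have "min d (r/4) / (2*d) \<ge> (d/4) / (2*d)" using d0 by (intro divide_right_mono) auto
    also have "(d/4) / (2*d) = 1/8" using d0 by simp
    finally show ?thesis unfolding s_def .
  qed
  have s2: "s \<le> 1/2" using d0 unfolding s_def by simp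
  define x where "x = w + of_real s * (p - w)"
  have nd: "norm (p - w) = d" unfolding d_def by (simp add: dist_norm)
  have dxw: "dist x w = s * d" using s0 nd by (simp add: x_def dist_norm norm_mult)
  have e: "p - x = of_real (1 - s) * (p - w)" unfolding x_def by (simp add: algebra_simps)
  have n1: "norm (of_real (1 - s) :: complex) = 1 - s" using s2 unfolding norm_of_real by simp
  have dpx: "dist p x = (1 - s) * d" unfolding dist_norm e norm_mult n1 nd ..
  have xin: "x \<in> ball p d" using dpx s0 d0 by simp
  have "Re (F x) \<ge> Re (F p) * (1 - dist p x / d) / 2" by (rule harnack[OF holb posF xin])
  also have "1 - dist p x / d = s" using dpx d0 by simp
  finally have "u x \<ge> u p * s / 2" using uF by simp
  moreover have "u p * s \<ge> u p * (1/8)" using mult_left_mono[OF s1, of "u p"] up by simp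
  ultimately have ux: "u x > 2 * q" using up by linarith
  have "s * d < r / 4"
  proof -
    have "s * d = min d (r/4) / 2" using d0 unfolding s_def by simp
    also have "\<dots> < r/4" using r by simp
    finally show ?thesis .
  qed
  then have "x \<in> ball w (r/4)" using dxw by (simp add: dist_commute)
  then have "u x \<le> Msup u w (r/4)" by (rule Msup_ge[OF cu])
  moreover have "dist w z < 2 * r"
  proof -
    have "dist w z \<le> dist w p + dist p z" by (rule dist_triangle)
    also have "\<dots> < r + r" using dr p(1) unfolding d_def by (simp add: dist_commute)
    finally show ?thesis by simp
  qed
  ultimately show ?thesis using ux w(1) unfolding Z_def q_def by auto
qed



lemma iterate:
  assumes hol: "F holomorphic_on UNIV" and uF: "\<And>z. u z = Re (F z)"
    and z0: "u z0 = 0" and R: "R > 0" and q0: "Msup u z0 (R/2) > 0"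
  shows "\<exists>w s. s > 0 \<and> u w = 0 \<and> Msup u w s \<le> 64 * Msup u w (s/2) \<and> Msup u z0 (R/2) \<le> Msup u w s"
proof (rule ccontr)
  assume no: "\<not> ?thesis"
  have cu: "continuous_on UNIV u" by (rule cont_u[OF hol uF])
  define q where "q = Msup u z0 (R/2)"
  have q: "q > 0" using q0 q_def by simp
  have ind: "\<exists>z. u z = 0 \<and> dist z z0 \<le> 4*R - 4*(R/2^k) \<and> 2^k * q \<le> Msup u z ((R/2^k)/2)" for k
  proof (induction k)
    case 0
    show ?case using z0 by (intro exI[of _ z0]) (simp add: q_def)
  next
    case (Suc k)
    then obtain z where z: "u z = 0" "dist z z0 \<le> 4*R - 4*(R/2^k)" "2^k * q \<le> Msup u z ((R/2^k)/2)"
      by blast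
    define r where "r = R/2^k"
    have r: "r > 0" using R r_def by simp
    have "q \<le> 2^k * q" using q by simp
    also have "\<dots> \<le> Msup u z (r/2)" using z(3) r_def by simp
    also have "\<dots> \<le> Msup u z r" by (rule Msup_mono_r[OF cu]) (use r in auto)
    finally have qr: "q \<le> Msup u z r" .
    have fail: "\<not> Msup u z r \<le> 64 * Msup u z (r/2)"
    proof
      assume "Msup u z r \<le> 64 * Msup u z (r/2)"
      then have "\<exists>w s. s > 0 \<and> u w = 0 \<and> Msup u w s \<le> 64 * Msup u w (s/2) \<and> Msup u z0 (R/2) \<le> Msup u w s"
        using r z(1) qr unfolding q_def by (intro exI[of _ z] exI[of _ r]) simp
      with no show False by blast
    qed
    obtain w where w: "u w = 0" "dist w z < 2*r" "2 * Msup u z (r/2) \<le> Msup u w (r/4)"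
      using step[OF hol uF z(1) r fail] by blast
    have "dist w z0 \<le> dist w z + dist z z0" by (rule dist_triangle)
    also have "\<dots> \<le> 4*R - 4*(R/2^(Suc k))" using w(2) z(2) unfolding r_def by simp
    finally have d: "dist w z0 \<le> 4*R - 4*(R/2^(Suc k))" .
    have "2^(Suc k) * q \<le> 2 * Msup u z (r/2)" using z(3) unfolding r_def by simp
    also have "\<dots> \<le> Msup u w (r/4)" by (rule w(3))
    also have "r/4 = (R/2^(Suc k))/2" unfolding r_def by simp
    finally show ?case using w(1) d by blast
  qed
  define B where "B = Msup u z0 (5*R)"
  have bnd: "2^k * q \<le> B" for k
  proof -
    obtain z where z: "u z = 0" "dist z z0 \<le> 4*R - 4*(R/2^k)" "2^k * q \<le> Msup u z ((R/2^k)/2)"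
      using ind[of k] by blast
    have rk: "R/2^k > 0" "R/2^k \<le> R" using R by (auto simp: field_simps)
    have "ball z ((R/2^k)/2) \<subseteq> ball z0 (5*R)"
    proof
      fix y assume "y \<in> ball z ((R/2^k)/2)"
      then have "dist z y < R" using rk by simp
      then have "dist y z0 < 5*R" using z(2) rk dist_triangle[of y z0 z] by (simp add: dist_commute)
      then show "y \<in> ball z0 (5*R)" by (simp add: dist_commute)
    qed
    then have "Msup u z ((R/2^k)/2) \<le> B" unfolding B_def by (intro Msup_mono[OF cu]) (use rk in auto)
    then show ?thesis using z(3) by simp
  qed
  obtain k :: nat where k: "B / q < real k" using reals_Archimedean2 by blast
  have "real k < 2^k" using less_exp[of k] by (metis of_nat_less_iff of_nat_numeral of_nat_power)
  then have "real k * q < 2^k * q" using q by (intro mult_strict_right_mono) auto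
  moreover have "B < real k * q" using k q by (simp add: divide_less_eq)
  ultimately have "B < 2^k * q" by linarith
  then show False using bnd[of k] by simp
qed



theorem corollary4:
  shows "\<exists>C>0. \<forall>u::complex \<Rightarrow> real. harmonic u \<and> \<not> (\<exists>c. \<forall>z. u z = c) \<longrightarrow>
     (\<exists>(zs::nat \<Rightarrow> complex) (\<rho>::nat \<Rightarrow> real).
        (\<forall>n. \<rho> n > 0 \<and> u (zs n) = 0 \<and> Msup u (zs n) (\<rho> n) \<le> C * Msup u (zs n) (\<rho> n / 2)) \<and>
        filterlim (\<lambda>n. Msup u (zs n) (\<rho> n)) at_top sequentially)"
proof (intro exI[of _ 64] conjI allI impI)
  show "(0::real) < 64" by simp
  fix u :: "complex \<Rightarrow> real"
  assume a: "harmonic u \<and> \<not> (\<exists>c. \<forall>z. u z = c)"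
  obtain F where hol: "F holomorphic_on UNIV" and uF0: "\<forall>z. u z = Re (F z)"
    using harmonic_Re a by blast
  have uF: "\<And>z. u z = Re (F z)" using uF0 by blast
  have nc: "\<not> (\<exists>c. \<forall>z. Re (F z) = c)" using a uF by simp
  have cu: "continuous_on UNIV u" by (rule cont_u[OF hol uF])
  have unb: "\<exists>w. u w > K" for K using Re_unbounded[OF hol nc] uF by simp
  have holm: "(\<lambda>z. - F z) holomorphic_on UNIV" using hol by (intro holomorphic_intros)
  have ncm: "\<not> (\<exists>c. \<forall>z. Re (- F z) = c)"
  proof
    assume "\<exists>c. \<forall>z. Re (- F z) = c"
    then obtain c where "\<forall>z. Re (- F z) = c" by blast
    then have "\<forall>z. Re (F z) = - c" by (simp add: minus_equation_iff)
    then show False using nc by blast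
  qed
  obtain w2 where w2: "Re (- F w2) > 0" using Re_unbounded[OF holm ncm] by blast
  obtain w1 where w1: "u w1 > 0" using unb by blast
  obtain z0 where z0: "u z0 = 0"
  proof -
    have "u w2 \<le> 0" using w2 uF[of w2] by simp
    then show ?thesis using exists_zero_between[OF cu connected_UNIV, of w2 w1] w1 that by auto
  qed
  obtain N :: nat where N: "dist w1 z0 < real N" using reals_Archimedean2 by blast
  have MN: "Msup u z0 (real N) > 0"
  proof -
    have "w1 \<in> ball z0 (real N)" using N by (simp add: dist_commute)
    then have "u w1 \<le> Msup u z0 (real N)" by (rule Msup_ge[OF cu])
    then show ?thesis using w1 by simp
  qed
  have N0: "real N > 0" using N by (metis dist_not_less_zero not_le order_le_less_trans)
  have ex: "\<exists>ws. snd ws > 0 \<and> u (fst ws) = 0 \<and> Msup u (fst ws) (snd ws) \<le> 64 * Msup u (fst ws) (snd ws / 2)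
            \<and> Msup u z0 (real n + real N) \<le> Msup u (fst ws) (snd ws)" for n
  proof -
    have Rpos: "2 * (real n + real N) > 0" using N0 by simp
    have "Msup u z0 (real N) \<le> Msup u z0 (real n + real N)"
      by (rule Msup_mono_r[OF cu N0]) simp
    moreover have eq2: "2 * (real n + real N) / 2 = real n + real N" by simp
    ultimately have "Msup u z0 (2 * (real n + real N) / 2) > 0" using MN by (simp only:)
    from iterate[OF hol uF z0 Rpos this, unfolded eq2] show ?thesis by auto
  qed
  have "\<exists>f. \<forall>n. snd (f n) > 0 \<and> u (fst (f n)) = 0 \<and>
      Msup u (fst (f n)) (snd (f n)) \<le> 64 * Msup u (fst (f n)) (snd (f n) / 2)
      \<and> Msup u z0 (real n + real N) \<le> Msup u (fst (f n)) (snd (f n))"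
    by (rule choice) (use ex in blast)
  then obtain f where f: "\<And>n. snd (f n) > 0 \<and> u (fst (f n)) = 0 \<and>
      Msup u (fst (f n)) (snd (f n)) \<le> 64 * Msup u (fst (f n)) (snd (f n) / 2)
      \<and> Msup u z0 (real n + real N) \<le> Msup u (fst (f n)) (snd (f n))"
    by blast
  show "\<exists>(zs::nat \<Rightarrow> complex) (\<rho>::nat \<Rightarrow> real).
        (\<forall>n. \<rho> n > 0 \<and> u (zs n) = 0 \<and> Msup u (zs n) (\<rho> n) \<le> 64 * Msup u (zs n) (\<rho> n / 2)) \<and>
        filterlim (\<lambda>n. Msup u (zs n) (\<rho> n)) at_top sequentially"
  proof (rule exI[of _ "\<lambda>n. fst (f n)"], rule exI[of _ "\<lambda>n. snd (f n)"], rule conjI)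
    show "\<forall>n. snd (f n) > 0 \<and> u (fst (f n)) = 0 \<and> Msup u (fst (f n)) (snd (f n)) \<le> 64 * Msup u (fst (f n)) (snd (f n) / 2)"
      using f by blast
  next
    show "filterlim (\<lambda>n. Msup u (fst (f n)) (snd (f n))) at_top sequentially"
      unfolding filterlim_at_top
    proof
      fix K :: real
      obtain w where w: "u w > K" using unb by blast
      obtain n0 :: nat where n0: "dist w z0 < real n0" using reals_Archimedean2 by blast
      show "eventually (\<lambda>n. K \<le> Msup u (fst (f n)) (snd (f n))) sequentially"
        unfolding eventually_sequentially
      proof (intro exI[of _ n0] allI impI)
        fix n assume "n0 \<le> n"
        then have "w \<in> ball z0 (real n + real N)" using n0 by (simp add: dist_commute)
        then have "u w \<le> Msup u z0 (real n + real N)" by (rule Msup_ge[OF cu])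
        then show "K \<le> Msup u (fst (f n)) (snd (f n))" using f[of n] w by linarith
      qed
    qed
  qed
qed


end
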